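(* Let $\omega=(\alpha^+,\alpha^-,\gamma_1,\gamma_2)\in\Omega$. Then the principal value product representation $$\mathsf{E}_\omega(z)=\lim_{R\to\infty}\prod_{i:\,\alpha_i^+>R^{-2}}(1-\alpha_i^+z)\prod_{i:\,\alpha_i^->R^{-2}}(1+\alpha_i^-z)$$ holds if and only if $$\gamma_1=\lim_{R\to\infty}\left(\sum_{i:\,\alpha_i^+>R^{-2}}\alpha_i^+-\sum_{i:\,\alpha_i^->R^{-2}}\alpha_i^-\right)\quad\text{and}\quad\gamma_2=0.$$
   Context: $\Omega$ is the set of $\omega=(\alpha^+,\alpha^-,\gamma_1,\gamma_2)$ with $\alpha^\pm=(\alpha_1^\pm\ge\alpha_2^\pm\ge\dots\ge0)$ non-increasing sequences of non-negative reals, $\sum_i(\alpha_i^+)^2+\sum_i(\alpha_i^-)^2<\infty$, $\gamma_1\in\mathbb{R}$, $\gamma_2\ge0$. For $\omega\in\Omega$, $\mathsf{E}_\omega(z)=e^{-\gamma_1 z-\frac{\gamma_2}{2}z^2}\prod_{i}e^{z\alpha_i^+}(1-z\alpha_i^+)\prod_{i}e^{-z\alpha_i^-}(1+z\alpha_i^-)$. *)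

theory Defs
  imports "HOL-Analysis.Analysis"
begin

text \<open>The parameter space Omega: omega = (ap, am, g1, g2), sequences indexed from 0.\<close>
definition Omega :: "(nat \<Rightarrow> real) \<Rightarrow> (nat \<Rightarrow> real) \<Rightarrow> real \<Rightarrow> real \<Rightarrow> bool" where
  "Omega ap am g1 g2 \<longleftrightarrow>
     antimono ap \<and> (\<forall>i. ap i \<ge> 0) \<and>
     antimono am \<and> (\<forall>i. am i \<ge> 0) \<and>
     summable (\<lambda>i. (ap i)\<^sup>2) \<and> summable (\<lambda>i. (am i)\<^sup>2) \<and> g2 \<ge> 0"

definition E_omega :: "(nat \<Rightarrow> real) \<Rightarrow> (nat \<Rightarrow> real) \<Rightarrow> real \<Rightarrow> real \<Rightarrow> complex \<Rightarrow> complex" where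
  "E_omega ap am g1 g2 z =
     exp (- of_real g1 * z - of_real (g2 / 2) * z\<^sup>2)
     * (\<Prod>i. exp (z * of_real (ap i)) * (1 - z * of_real (ap i)))
     * (\<Prod>i. exp (- z * of_real (am i)) * (1 + z * of_real (am i)))"

end

theory Submission imports Defs "HOL-Real_Asymp.Real_Asymp" begin

lemma inv_sq_small:
  assumes "(d::real) > 0"
  shows "eventually (\<lambda>R::real. 1 / R^2 < d) at_top"
proof -
  have "((\<lambda>R::real. 1 / R^2) \<longlongrightarrow> 0) at_top" by real_asymp
  from order_tendstoD(2)[OF this assms] show ?thesis .
qed

lemma prod_set_tendsto:
  fixes f :: "nat \<Rightarrow> complex" and a :: "nat \<Rightarrow> real"
  assumes am: "antimono a" and nn: "\<forall>i. a i \<ge> 0" and a0: "a \<longlonglongrightarrow> 0"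
    and cp: "convergent_prod f" and one: "\<And>i. a i = 0 \<Longrightarrow> f i = 1"
  shows "((\<lambda>R::real. \<Prod>i | a i > 1/R^2. f i) \<longlongrightarrow> prodinf f) at_top"
proof (cases "\<forall>i. a i > 0")
  case True
  define N where "N R = (LEAST i. \<not> a i > 1/R^2)" for R :: real
  have ex: "\<exists>i. \<not> a i > 1/R^2" if "R \<noteq> 0" for R :: real
  proof -
    have "1/R^2 > 0" using that by simp
    from order_tendstoD(2)[OF a0 this] obtain i where "a i < 1/R^2"
      by (meson eventually_sequentially order.refl)
    then show ?thesis using not_less_iff_gr_or_eq by blast
  qed
  have setEq: "{i. a i > 1/R^2} = {..<N R}" if "R \<noteq> 0" for R :: real
  proof (intro set_eqI iffI)
    fix i assume "i \<in> {i. a i > 1/R^2}"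
    then have ai: "a i > 1/R^2" by simp
    show "i \<in> {..<N R}"
    proof (rule ccontr)
      assume "i \<notin> {..<N R}"
      then have "N R \<le> i" by simp
      then have "a i \<le> a (N R)" using am by (simp add: antimono_def)
      moreover have "\<not> a (N R) > 1/R^2" unfolding N_def using LeastI_ex[OF ex[OF that]] .
      ultimately show False using ai by simp
    qed
  next
    fix i assume "i \<in> {..<N R}"
    then show "i \<in> {i. a i > 1/R^2}" unfolding N_def using not_less_Least by fastforce
  qed
  have Ninf: "filterlim N at_top at_top"
    unfolding filterlim_at_top
  proof
    fix n
    have "eventually (\<lambda>R::real. 1 / R^2 < a n) at_top" using True inv_sq_small by blast
    then show "eventually (\<lambda>R. n \<le> N R) at_top"
      using eventually_gt_at_top[of "0::real"]
    proof eventually_elim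
      case (elim R)
      have "a n \<le> a n" by simp
      then have "n \<in> {i. a i > 1/R^2}" using elim by simp
      then show ?case using setEq[of R] elim by auto
    qed
  qed
  have h: "(\<lambda>n. \<Prod>i<n. f i) \<longlonglongrightarrow> prodinf f"
    by (rule LIMSEQ_imp_Suc) (use convergent_prod_LIMSEQ[OF cp] in \<open>simp add: lessThan_Suc_atMost\<close>)
  have "((\<lambda>R. \<Prod>i<N R. f i) \<longlongrightarrow> prodinf f) at_top"
    using filterlim_compose[OF h Ninf] by (simp add: o_def)
  then show ?thesis
  proof (rule tendsto_cong[THEN iffD1, rotated])
    show "\<forall>\<^sub>F R in at_top. (\<Prod>i<N R. f i) = (\<Prod>i | a i > 1/R^2. f i)"
      using eventually_gt_at_top[of "0::real"] by eventually_elim (simp add: setEq)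
  qed
next
  case False
  then obtain m where m: "a m = 0" using False nn by (metis less_eq_real_def)
  define B where "B = {i. a i > 0}"
  have "B \<subseteq> {..<m}"
  proof
    fix i assume "i \<in> B"
    then have "a i > 0" by (simp add: B_def)
    show "i \<in> {..<m}"
    proof (rule ccontr)
      assume "i \<notin> {..<m}"
      then have "a i \<le> a m" using am by (simp add: antimono_def)
      then show False using m \<open>a i > 0\<close> by simp
    qed
  qed
  then have fB: "finite B" using finite_subset by blast
  have pB: "prodinf f = (\<Prod>i\<in>B. f i)"
    by (rule prodinf_finite[OF fB]) (use nn one in \<open>auto simp: B_def less_le\<close>)
  define d where "d = (if B = {} then 1 else Min (a ` B))"
  have dpos: "d > 0" using fB by (auto simp: d_def B_def)
  have dle: "\<And>i. i \<in> B \<Longrightarrow> d \<le> a i" using fB by (auto simp: d_def)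
  have "eventually (\<lambda>R::real. (\<Prod>i | a i > 1/R^2. f i) = prodinf f) at_top"
    using inv_sq_small[OF dpos]
  proof eventually_elim
    case (elim R)
    have "{i. a i > 1/R^2} = B"
    proof (intro set_eqI iffI)
      fix i assume "i \<in> {i. a i > 1/R^2}"
      moreover have "1/R^2 \<ge> 0" by simp
      ultimately show "i \<in> B" unfolding B_def by (smt (verit) mem_Collect_eq)
    next
      fix i assume "i \<in> B"
      then show "i \<in> {i. a i > 1/R^2}" using dle[of i] elim by simp
    qed
    then show ?case using pB by simp
  qed
  then show ?thesis by (rule tendsto_eventually)
qed

lemma fp_bound:
  fixes w :: complex
  shows "norm (exp w * (1 - w) - 1) \<le> 2 * exp (norm w) * (norm w)^2"
proof -
  have T1: "norm (exp w - (1 + w)) \<le> exp \<bar>Re w\<bar> * (norm w)^2"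
    using Taylor_exp[of w 1] by (simp add: numeral_2_eq_2)
  have T0: "norm (exp w - 1) \<le> exp \<bar>Re w\<bar> * norm w"
    using Taylor_exp[of w 0] by simp
  have e: "exp \<bar>Re w\<bar> \<le> exp (norm w)" using abs_Re_le_cmod by simp
  have eq: "exp w * (1 - w) - 1 = (exp w - (1 + w)) - w * (exp w - 1)"
    by (simp add: algebra_simps)
  have "norm (exp w * (1 - w) - 1) \<le> norm (exp w - (1 + w)) + norm w * norm (exp w - 1)"
    unfolding eq by (metis norm_triangle_ineq4 norm_mult)
  also have "\<dots> \<le> exp \<bar>Re w\<bar> * (norm w)^2 + norm w * (exp \<bar>Re w\<bar> * norm w)"
    by (intro add_mono T1 mult_left_mono T0) auto
  also have "\<dots> = 2 * exp \<bar>Re w\<bar> * (norm w)^2" by (simp add: power2_eq_square)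
  also have "\<dots> \<le> 2 * exp (norm w) * (norm w)^2" using e by (intro mult_right_mono) auto
  finally show ?thesis .
qed


lemma conv_fp:
  fixes z :: complex and a :: "nat \<Rightarrow> real"
  assumes am: "antimono a" and nn: "\<forall>i. a i \<ge> 0" and sq: "summable (\<lambda>i. (a i)^2)"
  shows "convergent_prod (\<lambda>i. exp (z * of_real (a i)) * (1 - z * of_real (a i)))"
proof -
  define C where "C = 2 * exp (norm z * a 0) * (norm z)^2"
  have bd: "norm (norm (exp (z * of_real (a i)) * (1 - z * of_real (a i)) - 1)) \<le> C * (a i)^2" for i
  proof -
    have n: "norm (z * of_real (a i)) = norm z * a i" using nn by (simp add: norm_mult)
    have "a i \<le> a 0" using am by (simp add: antimono_def)
    then have "exp (norm z * a i) \<le> exp (norm z * a 0)" by (simp add: mult_left_mono)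
    then have "2 * exp (norm z * a i) * (norm z * a i)^2 \<le> 2 * exp (norm z * a 0) * (norm z * a i)^2"
      by (intro mult_right_mono) auto
    then show ?thesis using fp_bound[of "z * of_real (a i)"] unfolding n C_def
      by (simp add: power_mult_distrib mult.assoc)
  qed
  have "summable (\<lambda>i. norm (exp (z * of_real (a i)) * (1 - z * of_real (a i)) - 1))"
    by (rule summable_comparison_test'[OF summable_mult[OF sq, of C]]) (use bd in auto)
  then show ?thesis
    by (intro abs_convergent_prod_imp_convergent_prod summable_imp_abs_convergent_prod)
qed

lemma prod_split:
  fixes z :: complex and a :: "nat \<Rightarrow> real"
  shows "(\<Prod>i\<in>A. (1 - of_real (a i) * z)) =
     (\<Prod>i\<in>A. exp (z * of_real (a i)) * (1 - z * of_real (a i))) * exp (- z * of_real (\<Sum>i\<in>A. a i))"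
proof (cases "finite A")
  case True
  have "exp (- z * of_real (\<Sum>i\<in>A. a i)) = (\<Prod>i\<in>A. exp (- z * of_real (a i)))"
    using exp_sum[OF True, of "\<lambda>i. - z * of_real (a i)"] by (simp add: sum_distrib_left)
  then have "(\<Prod>i\<in>A. exp (z * of_real (a i)) * (1 - z * of_real (a i))) * exp (- z * of_real (\<Sum>i\<in>A. a i))
     = (\<Prod>i\<in>A. exp (z * of_real (a i)) * (1 - z * of_real (a i)) * exp (- z * of_real (a i)))"
    by (simp add: prod.distrib)
  also have "\<dots> = (\<Prod>i\<in>A. (1 - of_real (a i) * z))"
  proof (rule prod.cong)
    fix i
    have "exp (z * of_real (a i)) * exp (- z * of_real (a i)) = 1"
      by (simp add: exp_minus)
    then show "exp (z * of_real (a i)) * (1 - z * of_real (a i)) * exp (- z * of_real (a i)) = 1 - of_real (a i) * z"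
      by (simp add: algebra_simps)
  qed simp
  finally show ?thesis by simp
qed simp


theorem proposition5p7:
  fixes ap am :: "nat \<Rightarrow> real" and g1 g2 :: real
  assumes "Omega ap am g1 g2"
  shows "(\<forall>z::complex.
            ((\<lambda>R::real. (\<Prod>i | ap i > 1 / R\<^sup>2. (1 - of_real (ap i) * z))
                       * (\<Prod>i | am i > 1 / R\<^sup>2. (1 + of_real (am i) * z)))
             \<longlongrightarrow> E_omega ap am g1 g2 z) at_top)
         \<longleftrightarrow>
         (((\<lambda>R::real. (\<Sum>i | ap i > 1 / R\<^sup>2. ap i) - (\<Sum>i | am i > 1 / R\<^sup>2. am i))
             \<longlongrightarrow> g1) at_top
          \<and> g2 = 0)"
proof -
  from assms have amp: "antimono ap" and nnp: "\<forall>i. ap i \<ge> 0"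
    and amm: "antimono am" and nnm: "\<forall>i. am i \<ge> 0"
    and sqp: "summable (\<lambda>i. (ap i)^2)" and sqm: "summable (\<lambda>i. (am i)^2)" and g2nn: "g2 \<ge> 0"
    unfolding Omega_def by auto
  have lim0: "a \<longlonglongrightarrow> 0" if nn: "\<forall>i. a i \<ge> 0" and sq: "summable (\<lambda>i. (a i)^2)" for a :: "nat \<Rightarrow> real"
  proof -
    have "(\<lambda>i. sqrt ((a i)^2)) \<longlonglongrightarrow> sqrt 0"
      by (intro tendsto_real_sqrt summable_LIMSEQ_zero[OF sq])
    then show ?thesis using nn by simp
  qed
  have a0p: "ap \<longlonglongrightarrow> 0" using lim0 nnp sqp by blast
  have a0m: "am \<longlonglongrightarrow> 0" using lim0 nnm sqm by blast
  define fp where "fp z x = exp (z * of_real x) * (1 - z * of_real x)" for z :: complex and x :: real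
  define fm where "fm z x = exp (- z * of_real x) * (1 + z * of_real x)" for z :: complex and x :: real
  have fmfp: "fm z x = fp (-z) x" for z x by (simp add: fm_def fp_def)
  define FR where "FR z R = (\<Prod>i | ap i > 1 / R\<^sup>2. fp z (ap i)) * (\<Prod>i | am i > 1 / R\<^sup>2. fm z (am i))"
    for z :: complex and R :: real
  define F where "F z = prodinf (\<lambda>i. fp z (ap i)) * prodinf (\<lambda>i. fm z (am i))" for z
  define S where "S R = (\<Sum>i | ap i > 1 / R\<^sup>2. ap i) - (\<Sum>i | am i > 1 / R\<^sup>2. am i)" for R :: real
  define P where "P z R = (\<Prod>i | ap i > 1 / R\<^sup>2. (1 - of_real (ap i) * z))
                       * (\<Prod>i | am i > 1 / R\<^sup>2. (1 + of_real (am i) * z))" for z :: complex and R :: real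
  have cpp: "convergent_prod (\<lambda>i. fp z (ap i))" for z
    unfolding fp_def by (rule conv_fp[OF amp nnp sqp])
  have cpm: "convergent_prod (\<lambda>i. fm z (am i))" for z
    unfolding fmfp using conv_fp[OF amm nnm sqm, of "-z"] by (simp add: fp_def)
  have FR_lim: "((\<lambda>R. FR z R) \<longlongrightarrow> F z) at_top" for z
    unfolding FR_def F_def
    by (intro tendsto_mult prod_set_tendsto amp nnp a0p amm nnm a0m cpp cpm)
       (simp_all add: fp_def fm_def)
  have E_eq: "E_omega ap am g1 g2 z = exp (- of_real g1 * z - of_real (g2 / 2) * z\<^sup>2) * F z" for z
    by (simp add: E_omega_def F_def fp_def fm_def mult.assoc)
  have P_eq: "P z R = FR z R * exp (- z * of_real (S R))" for z R
  proof -
    have 1: "(\<Prod>i | am i > 1 / R\<^sup>2. (1 + of_real (am i) * z)) =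
       (\<Prod>i | am i > 1 / R\<^sup>2. fm z (am i)) * exp (z * of_real (\<Sum>i | am i > 1 / R\<^sup>2. am i))"
      using prod_split[of am "-z" "{i. am i > 1 / R\<^sup>2}"] by (simp add: fm_def)
    have 2: "(\<Prod>i | ap i > 1 / R\<^sup>2. (1 - of_real (ap i) * z)) =
       (\<Prod>i | ap i > 1 / R\<^sup>2. fp z (ap i)) * exp (- z * of_real (\<Sum>i | ap i > 1 / R\<^sup>2. ap i))"
      using prod_split[of ap z "{i. ap i > 1 / R\<^sup>2}"] by (simp add: fp_def)
    show ?thesis unfolding P_def 1 2 FR_def S_def
      by (simp add: algebra_simps flip: exp_add)
  qed
  have Sfold: "(\<lambda>R::real. (\<Sum>i | ap i > 1 / R\<^sup>2. ap i) - (\<Sum>i | am i > 1 / R\<^sup>2. am i)) = S"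
    by (simp add: S_def[abs_def])
  have Pfold: "(\<lambda>R::real. (\<Prod>i | ap i > 1 / R\<^sup>2. (1 - of_real (ap i) * z))
                       * (\<Prod>i | am i > 1 / R\<^sup>2. (1 + of_real (am i) * z))) = P z" for z
    by (simp add: P_def[abs_def])
  show ?thesis
    unfolding Sfold Pfold
  proof
    assume H: "\<forall>z. (P z \<longlongrightarrow> E_omega ap am g1 g2 z) at_top"
    define c where "c = 1 / (2 * (ap 0 + am 0 + 1))"
    have cpos: "c > 0" proof - have "ap 0 \<ge> 0" "am 0 \<ge> 0" using nnp nnm by auto then show ?thesis by (simp add: c_def) qed
    have key: "(S \<longlongrightarrow> g1 + g2 * x / 2) at_top" if x0: "x \<noteq> 0" and xc: "\<bar>x\<bar> \<le> c" for x :: real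
    proof -
      define z where "z = complex_of_real x"
      have small: "\<bar>x\<bar> * a < 1" if "0 \<le> a" "a \<le> ap 0 + am 0" for a
      proof -
        have "\<bar>x\<bar> * a \<le> c * (ap 0 + am 0)" using xc that by (intro mult_mono) auto
        also have "\<dots> < 1" proof - have "ap 0 \<ge> 0" "am 0 \<ge> 0" using nnp nnm by auto then show ?thesis by (simp add: c_def field_simps) qed
        finally show ?thesis .
      qed
      have bp: "ap i \<le> ap 0 + am 0" for i
      proof -
        have "ap i \<le> ap 0" using amp by (simp add: antimono_def)
        moreover have "am 0 \<ge> 0" using nnm by auto
        ultimately show ?thesis by linarith
      qed
      have bm: "am i \<le> ap 0 + am 0" for i
      proof -
        have "am i \<le> am 0" using amm by (simp add: antimono_def)
        moreover have "ap 0 \<ge> 0" using nnp by auto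
        ultimately show ?thesis by linarith
      qed
      have nzp: "fp z (ap i) \<noteq> 0" for i
      proof -
        have "\<bar>x\<bar> * ap i < 1" using small[OF _ bp] nnp by auto
        moreover have "x * ap i \<le> \<bar>x\<bar> * ap i" using nnp by (intro mult_right_mono) auto
        ultimately have "1 - x * ap i \<noteq> 0" by linarith
        then have "1 - z * of_real (ap i) \<noteq> 0" unfolding z_def
          by (metis of_real_1 of_real_diff of_real_eq_0_iff of_real_mult)
        then show ?thesis by (simp add: fp_def)
      qed
      have nzm: "fm z (am i) \<noteq> 0" for i
      proof -
        have "\<bar>x\<bar> * am i < 1" using small[OF _ bm] nnm by auto
        moreover have "(-x) * am i \<le> \<bar>x\<bar> * am i" using nnm by (intro mult_right_mono) auto
        ultimately have "1 + x * am i \<noteq> 0" by linarith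
        then have "1 + z * of_real (am i) \<noteq> 0" unfolding z_def
          by (metis of_real_1 of_real_add of_real_eq_0_iff of_real_mult)
        then show ?thesis by (simp add: fm_def)
      qed
      have Fnz: "F z \<noteq> 0"
        unfolding F_def using prodinf_nonzero[OF cpp nzp] prodinf_nonzero[OF cpm nzm] by simp
      have FRev: "eventually (\<lambda>R. FR z R \<noteq> 0) at_top"
        using tendsto_imp_eventually_ne[OF FR_lim Fnz] .
      have "((\<lambda>R. P z R / FR z R) \<longlongrightarrow> E_omega ap am g1 g2 z / F z) at_top"
        using H FR_lim Fnz by (intro tendsto_divide) auto
      then have "((\<lambda>R. exp (- z * of_real (S R))) \<longlongrightarrow> E_omega ap am g1 g2 z / F z) at_top"
      proof (rule tendsto_cong[THEN iffD1, rotated])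
        show "\<forall>\<^sub>F R in at_top. P z R / FR z R = exp (- z * of_real (S R))"
          using FRev by eventually_elim (simp add: P_eq)
      qed
      moreover have "E_omega ap am g1 g2 z / F z = of_real (exp (- g1 * x - g2 / 2 * x\<^sup>2))"
        using Fnz unfolding E_eq z_def by (simp flip: exp_of_real)
      moreover have "(\<lambda>R. exp (- z * of_real (S R))) = (\<lambda>R. of_real (exp (- x * S R)))"
        unfolding z_def by (simp flip: exp_of_real)
      ultimately have "((\<lambda>R. of_real (exp (- x * S R)) :: complex) \<longlongrightarrow> of_real (exp (- g1 * x - g2 / 2 * x\<^sup>2))) at_top"
        by simp
      then have "((\<lambda>R. exp (- x * S R)) \<longlongrightarrow> exp (- g1 * x - g2 / 2 * x\<^sup>2)) at_top"
        by (simp only: tendsto_of_real_iff)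
      then have "((\<lambda>R. ln (exp (- x * S R))) \<longlongrightarrow> ln (exp (- g1 * x - g2 / 2 * x\<^sup>2))) at_top"
        by (rule tendsto_ln) simp
      then have "((\<lambda>R. (-1/x) * (- x * S R)) \<longlongrightarrow> (-1/x) * (- g1 * x - g2 / 2 * x\<^sup>2)) at_top"
        by (intro tendsto_mult_left) simp
      moreover have "(\<lambda>R. (-1/x) * (- x * S R)) = S" using x0 by auto
      moreover have "(-1/x) * (- g1 * x - g2 / 2 * x\<^sup>2) = g1 + g2 * x / 2"
        using x0 by (simp add: field_simps power2_eq_square)
      ultimately show ?thesis by simp
    qed
    have k1: "(S \<longlongrightarrow> g1 + g2 * c / 2) at_top" using key[of c] cpos by simp
    have k2: "(S \<longlongrightarrow> g1 + g2 * (-c) / 2) at_top" using key[of "-c"] cpos by simp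
    have "g1 + g2 * c / 2 = g1 + g2 * (-c) / 2" using tendsto_unique[OF _ k1 k2] by simp
    then have g20: "g2 = 0" using cpos by simp
    show "(S \<longlongrightarrow> g1) at_top \<and> g2 = 0" using k1 g20 by simp
  next
    assume A: "(S \<longlongrightarrow> g1) at_top \<and> g2 = 0"
    show "\<forall>z. (P z \<longlongrightarrow> E_omega ap am g1 g2 z) at_top"
    proof
      fix z
      have "((\<lambda>R. FR z R * exp (- z * of_real (S R))) \<longlongrightarrow> F z * exp (- z * of_real g1)) at_top"
        using A FR_lim by (intro tendsto_intros) auto
      moreover have "F z * exp (- z * of_real g1) = E_omega ap am g1 g2 z"
        using A unfolding E_eq by (simp add: mult.commute)
      ultimately show "(P z \<longlongrightarrow> E_omega ap am g1 g2 z) at_top"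
        by (simp add: P_eq[abs_def])
    qed
  qed
qed

end
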